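(* Let $q$ be a prime power, $0<r\leq m$, $g_1,\dots,g_r\in\mathbb{F}_{q^m}$, and let $\mathcal{A}\subseteq\langle g_1,\dots,g_r\rangle_{\mathbb{F}_q}$ be a subset containing an $\mathbb{F}_q$-linear subspace of dimension at least $d$, where $d\leq r$. Let $t\ge 1$ and let $(e_1,\dots,e_t)$ be drawn uniformly at random among $t$-tuples of $\mathbb{F}_q$-linearly independent elements of $\mathbb{F}_{q^m}$. Then the probability that there exists $\mathbf{a}=(a_1,\dots,a_t)\in\mathcal{A}^t\setminus\{\mathbf{0}\}$ with $\sum_{j=1}^t a_je_j=0$ is at most \[ \frac{q^{tr+1}-(q^d-1)(q^t-1)}{q^{m+1}-q^t}. \]
   Context: $\langle g_1,\dots,g_r\rangle_{\mathbb{F}_q}$ denotes the $\mathbb{F}_q$-linear span of $g_1,\dots,g_r$ in $\mathbb{F}_{q^m}$. *)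

theory Defs
  imports Complex_Main "HOL-Computational_Algebra.Primes"
begin

text \<open>The big field F_{q^m} is a finite type 'a of class field; the base field F_q is
  a subfield K of it (a subset closed under the field operations).\<close>

definition is_subfield :: "'a::field set \<Rightarrow> bool" where
  "is_subfield K \<longleftrightarrow> 0 \<in> K \<and> 1 \<in> K \<and>
     (\<forall>x\<in>K. \<forall>y\<in>K. x + y \<in> K \<and> x * y \<in> K) \<and>
     (\<forall>x\<in>K. - x \<in> K \<and> inverse x \<in> K)"

definition lin_comb :: "'a::field list \<Rightarrow> 'a list \<Rightarrow> 'a" where
  "lin_comb cs vs = (\<Sum>i<length vs. cs ! i * vs ! i)"

definition K_span :: "'a::field set \<Rightarrow> 'a list \<Rightarrow> 'a set" where
  "K_span K gs = {lin_comb cs gs | cs. length cs = length gs \<and> set cs \<subseteq> K}"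

definition K_lin_indep :: "'a::field set \<Rightarrow> 'a list \<Rightarrow> bool" where
  "K_lin_indep K vs \<longleftrightarrow>
     (\<forall>cs. length cs = length vs \<and> set cs \<subseteq> K \<and> lin_comb cs vs = 0 \<longrightarrow> set cs \<subseteq> {0})"

definition K_subspace :: "'a::field set \<Rightarrow> 'a set \<Rightarrow> bool" where
  "K_subspace K V \<longleftrightarrow> 0 \<in> V \<and> (\<forall>x\<in>V. \<forall>y\<in>V. x + y \<in> V) \<and> (\<forall>c\<in>K. \<forall>x\<in>V. c * x \<in> V)"

definition K_dim_ge :: "'a::field set \<Rightarrow> 'a set \<Rightarrow> nat \<Rightarrow> bool" where
  "K_dim_ge K V d \<longleftrightarrow> (\<exists>vs. length vs = d \<and> set vs \<subseteq> V \<and> K_lin_indep K vs)"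

end

theory Submission
  imports Defs
begin


lemma lc_Nil[simp]: "lin_comb cs [] = 0"
  by (simp add: lin_comb_def)

lemma lc_Cons[simp]: "lin_comb (c#cs) (v#vs) = c*v + lin_comb cs vs"
  unfolding lin_comb_def length_Cons sum.lessThan_Suc_shift by simp

lemma lc_diff:
  assumes "length cs = length vs" "length cs' = length vs"
  shows "lin_comb cs vs - lin_comb cs' vs = lin_comb (map2 (-) cs cs') vs"
  using assms by (simp add: lin_comb_def sum_subtractf[symmetric] left_diff_distrib)

lemma lc_scale:
  assumes "length cs = length vs"
  shows "lin_comb (map (\<lambda>x. w*x) cs) vs = w * lin_comb cs vs"
  using assms by (simp add: lin_comb_def sum_distrib_left mult.assoc)

lemma sf_diff: "is_subfield K \<Longrightarrow> x \<in> K \<Longrightarrow> y \<in> K \<Longrightarrow> x - y \<in> K"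
  unfolding is_subfield_def by (metis diff_conv_add_uminus)

lemma sf_div: "is_subfield K \<Longrightarrow> x \<in> K \<Longrightarrow> y \<in> K \<Longrightarrow> x / y \<in> K"
  unfolding is_subfield_def by (metis divide_inverse)

lemma sf_neg: "is_subfield K \<Longrightarrow> x \<in> K \<Longrightarrow> - x \<in> K"
  unfolding is_subfield_def by blast

lemma sf_mult: "is_subfield K \<Longrightarrow> x \<in> K \<Longrightarrow> y \<in> K \<Longrightarrow> x * y \<in> K"
  unfolding is_subfield_def by blast

lemma lc_in_subspace:
  assumes "K_subspace K V" "set vs \<subseteq> V" "set cs \<subseteq> K" "length cs = length vs"
  shows "lin_comb cs vs \<in> V"
  using assms(2-4)
proof (induction vs arbitrary: cs)
  case Nil then show ?case using assms(1) by (simp add: K_subspace_def)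
next
  case (Cons v vs)
  then obtain c cs' where cs: "cs = c # cs'" by (cases cs) auto
  show ?case using Cons assms(1) unfolding cs K_subspace_def by auto
qed

lemma span_card_le:
  assumes "finite K"
  shows "card (K_span K gs) \<le> card K ^ length gs"
proof -
  have "K_span K gs = (\<lambda>cs. lin_comb cs gs) ` {cs. set cs \<subseteq> K \<and> length cs = length gs}"
    unfolding K_span_def by auto
  then have "card (K_span K gs) \<le> card {cs. set cs \<subseteq> K \<and> length cs = length gs}"
    using card_image_le finite_lists_length_eq[OF assms] by metis
  then show ?thesis using card_lists_length_eq[OF assms] by simp
qed

lemma span_card_indep:
  assumes "finite K" "is_subfield K" "K_lin_indep K vs"
  shows "card (K_span K vs) = card K ^ length vs"
proof -
  let ?L = "{cs. set cs \<subseteq> K \<and> length cs = length vs}"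
  have "K_span K vs = (\<lambda>cs. lin_comb cs vs) ` ?L"
    unfolding K_span_def by auto
  moreover have "inj_on (\<lambda>cs. lin_comb cs vs) ?L"
  proof (rule inj_onI)
    fix cs cs' assume h: "cs \<in> ?L" "cs' \<in> ?L" "lin_comb cs vs = lin_comb cs' vs"
    have "lin_comb (map2 (-) cs cs') vs = 0" using lc_diff[of cs vs cs'] h by simp
    moreover have "set (map2 (-) cs cs') \<subseteq> K"
    proof
      fix x assume "x \<in> set (map2 (-) cs cs')"
      then obtain i where i: "i < length cs" "i < length cs'" "x = cs ! i - cs' ! i"
        by (auto simp: set_zip)
      have "cs ! i \<in> K" "cs' ! i \<in> K" using i h(1,2) nth_mem by blast+
      then show "x \<in> K" using i sf_diff[OF assms(2)] by simp
    qed
    moreover have "length (map2 (-) cs cs') = length vs" using h by simp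
    ultimately have z: "set (map2 (-) cs cs') \<subseteq> {0}"
      using assms(3) unfolding K_lin_indep_def by blast
    show "cs = cs'"
    proof (rule nth_equalityI)
      show "length cs = length cs'" using h by simp
      fix i assume "i < length cs"
      then have i': "i < length (map2 (-) cs cs')" using h by simp
      then have "(map2 (-) cs cs') ! i \<in> set (map2 (-) cs cs')" by (rule nth_mem)
      moreover have "(map2 (-) cs cs') ! i = cs ! i - cs' ! i" using i' by simp
      ultimately have "cs ! i - cs' ! i = 0" using z by auto
      then show "cs ! i = cs' ! i" by simp
    qed
  qed
  ultimately show ?thesis using card_lists_length_eq[OF assms(1)] card_image by metis
qed

lemma indep_Cons:
  assumes "is_subfield K"
  shows "K_lin_indep K (e#ws) \<longleftrightarrow> K_lin_indep K ws \<and> e \<notin> K_span K ws"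
proof
  assume h: "K_lin_indep K (e#ws)"
  have "K_lin_indep K ws"
    unfolding K_lin_indep_def
  proof (intro allI impI)
    fix cs assume "length cs = length ws \<and> set cs \<subseteq> K \<and> lin_comb cs ws = 0"
    moreover have "0 \<in> K" using assms unfolding is_subfield_def by blast
    ultimately have "set (0#cs) \<subseteq> {0}"
      using spec[OF h[unfolded K_lin_indep_def], of "0#cs"] by auto
    then show "set cs \<subseteq> {0}" by simp
  qed
  moreover have "e \<notin> K_span K ws"
  proof
    assume "e \<in> K_span K ws"
    then obtain cs where cs: "length cs = length ws" "set cs \<subseteq> K" "e = lin_comb cs ws"
      unfolding K_span_def by auto
    have "-1 \<in> K" using assms unfolding is_subfield_def by blast
    then have "set ((-1)#cs) \<subseteq> {0}"
      using spec[OF h[unfolded K_lin_indep_def], of "(-1)#cs"] cs by auto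
    then show False by simp
  qed
  ultimately show "K_lin_indep K ws \<and> e \<notin> K_span K ws" by simp
next
  assume h: "K_lin_indep K ws \<and> e \<notin> K_span K ws"
  show "K_lin_indep K (e#ws)"
    unfolding K_lin_indep_def
  proof (intro allI impI)
    fix cs assume a: "length cs = length (e#ws) \<and> set cs \<subseteq> K \<and> lin_comb cs (e#ws) = 0"
    then obtain c cs' where cs: "cs = c#cs'" by (cases cs) auto
    have c0: "c = 0"
    proof (rule ccontr)
      assume "c \<noteq> 0"
      have ce: "c * e + lin_comb cs' ws = 0" using a unfolding cs by simp
      have "e = (- inverse c) * lin_comb cs' ws"
      proof -
        have "lin_comb cs' ws = - (c * e)" using ce by (simp add: eq_neg_iff_add_eq_0 add.commute)
        then show ?thesis using \<open>c \<noteq> 0\<close> by simp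
      qed
      also have "\<dots> = lin_comb (map (\<lambda>x. (- inverse c) * x) cs') ws"
        using a lc_scale[of cs' ws "- inverse c"] unfolding cs by simp
      finally have "e = lin_comb (map (\<lambda>x. (- inverse c) * x) cs') ws" .
      moreover have "set (map (\<lambda>x. (- inverse c) * x) cs') \<subseteq> K"
        using a assms unfolding cs is_subfield_def by auto
      ultimately have "e \<in> K_span K ws" using a unfolding K_span_def cs by force
      then show False using h by simp
    qed
    then have "set cs' \<subseteq> {0}" using a h unfolding cs K_lin_indep_def by auto
    then show "set cs \<subseteq> {0}" using c0 cs by simp
  qed
qed



definition Ei :: "'a::field set \<Rightarrow> nat \<Rightarrow> 'a list set" where
  "Ei K n = {es. length es = n \<and> K_lin_indep K es}"

lemma finite_Ei: "finite (Ei (K::'a::{field,finite} set) n)"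
proof -
  have "Ei K n \<subseteq> {xs. set xs \<subseteq> (UNIV::'a set) \<and> length xs = n}" unfolding Ei_def by auto
  moreover have "finite {xs. set xs \<subseteq> (UNIV::'a set) \<and> length xs = n}"
    by (rule finite_lists_length_eq) simp
  ultimately show ?thesis by (rule finite_subset)
qed

lemma Ei_Suc:
  assumes "is_subfield K"
  shows "Ei K (Suc n) = (\<lambda>(ws,e). e#ws) ` (SIGMA ws:Ei K n. UNIV - K_span K ws)"
proof
  show "Ei K (Suc n) \<subseteq> (\<lambda>(ws,e). e#ws) ` (SIGMA ws:Ei K n. UNIV - K_span K ws)"
  proof
    fix es assume "es \<in> Ei K (Suc n)"
    then obtain e ws where es: "es = e#ws" "length ws = n" "K_lin_indep K (e#ws)"
      unfolding Ei_def by (cases es) auto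
    then have mem: "(ws,e) \<in> (SIGMA ws:Ei K n. UNIV - K_span K ws)"
      using indep_Cons[OF assms, of e ws] es unfolding Ei_def by simp
    have "es = (\<lambda>(ws,e). e#ws) (ws,e)" using es(1) by simp
    from this mem show "es \<in> (\<lambda>(ws,e). e#ws) ` (SIGMA ws:Ei K n. UNIV - K_span K ws)"
      by (rule image_eqI)
  qed
next
  show "(\<lambda>(ws,e). e#ws) ` (SIGMA ws:Ei K n. UNIV - K_span K ws) \<subseteq> Ei K (Suc n)"
  proof
    fix x assume "x \<in> (\<lambda>(ws,e). e#ws) ` (SIGMA ws:Ei K n. UNIV - K_span K ws)"
    then obtain ws e where "x = e#ws" "ws \<in> Ei K n" "e \<notin> K_span K ws" by auto
    then show "x \<in> Ei K (Suc n)" using indep_Cons[OF assms, of e ws] unfolding Ei_def by simp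
  qed
qed

lemma card_Ei_Suc:
  fixes K :: "'a::{field,finite} set"
  assumes "is_subfield K" "card (UNIV::'a set) = card K ^ m"
  shows "card (Ei K (Suc n)) = card (Ei K n) * (card K ^ m - card K ^ n)"
proof -
  have inj: "inj_on (\<lambda>(ws,e). e#ws) (SIGMA ws:Ei K n. UNIV - K_span K ws)"
    by (auto simp: inj_on_def)
  have "card (Ei K (Suc n)) = card (SIGMA ws:Ei K n. UNIV - K_span K ws)"
    using Ei_Suc[OF assms(1)] card_image[OF inj] by simp
  also have "\<dots> = (\<Sum>ws\<in>Ei K n. card (UNIV - K_span K ws))"
    by (intro card_SigmaI) (auto simp: finite_Ei)
  also have "\<dots> = (\<Sum>ws\<in>Ei K n. card K ^ m - card K ^ n)"
  proof (rule sum.cong)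
    fix ws assume "ws \<in> Ei K n"
    then have "card (K_span K ws) = card K ^ n"
      using span_card_indep[OF finite assms(1)] unfolding Ei_def by auto
    then show "card (UNIV - K_span K ws) = card K ^ m - card K ^ n"
      using assms(2) by (simp add: card_Diff_subset)
  qed simp
  finally show ?thesis by simp
qed

lemma card_K_ge2: "is_subfield K \<Longrightarrow> finite K \<Longrightarrow> 2 \<le> card K"
proof -
  assume "is_subfield K" "finite K"
  then have "{0,1} \<subseteq> K" unfolding is_subfield_def by auto
  then have "card {0::'a,1} \<le> card K" using \<open>finite K\<close> card_mono by blast
  then show ?thesis by simp
qed

lemma card_Ei_pos:
  fixes K :: "'a::{field,finite} set"
  assumes "is_subfield K" "card (UNIV::'a set) = card K ^ m"
  shows "n \<le> m \<Longrightarrow> 0 < card (Ei K n)"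
proof (induction n)
  case 0
  have "Ei K 0 = {[]}" unfolding Ei_def K_lin_indep_def by auto
  then show ?case by simp
next
  case (Suc n)
  have "card K ^ n < card K ^ m"
    using card_K_ge2[OF assms(1) finite] Suc.prems by (intro power_strict_increasing) auto
  moreover have "0 < card (Ei K n)" using Suc.IH Suc.prems by simp
  ultimately show ?case unfolding card_Ei_Suc[OF assms] by simp
qed


definition delf :: "nat \<Rightarrow> nat \<Rightarrow> nat" where
  "delf j i = (if i < j then i else Suc i)"

definition del_at :: "nat \<Rightarrow> nat \<Rightarrow> 'a list \<Rightarrow> 'a list" where
  "del_at t j es = map (\<lambda>i. es ! delf j i) [0..<t-1]"

lemma sum_skip:
  fixes g :: "nat \<Rightarrow> 'b::comm_monoid_add"
  assumes "j < t"
  shows "(\<Sum>k\<in>{..<t}-{j}. g k) = (\<Sum>i<t-1. g (delf j i))"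
proof -
  have img: "delf j ` {..<t-1} = {..<t}-{j}"
  proof
    show "delf j ` {..<t-1} \<subseteq> {..<t}-{j}" using assms by (auto simp: delf_def)
  next
    show "{..<t}-{j} \<subseteq> delf j ` {..<t-1}"
    proof
      fix k assume k: "k \<in> {..<t}-{j}"
      show "k \<in> delf j ` {..<t-1}"
      proof (cases "k < j")
        case True
        then have "delf j k = k" by (simp add: delf_def)
        moreover have "k < t - 1" using True assms by auto
        ultimately show ?thesis by (metis image_eqI lessThan_iff)
      next
        case False
        then have "k > j" using k by auto
        then have "delf j (k-1) = k" by (auto simp: delf_def)
        moreover have "k - 1 < t - 1" using k \<open>k > j\<close> by auto
        ultimately show ?thesis by (metis image_eqI lessThan_iff)
      qed
    qed
  qed
  have inj: "inj_on (delf j) {..<t-1}" by (auto simp: inj_on_def delf_def split: if_splits)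
  show ?thesis using sum.reindex[OF inj, of g] img by simp
qed



lemma delf_img: "j < t \<Longrightarrow> delf j ` {..<t-1} = {..<t}-{j}"
proof
  assume assms: "j < t"
  show "delf j ` {..<t-1} \<subseteq> {..<t}-{j}" using assms by (auto simp: delf_def)
  show "{..<t}-{j} \<subseteq> delf j ` {..<t-1}"
  proof
    fix k assume k: "k \<in> {..<t}-{j}"
    show "k \<in> delf j ` {..<t-1}"
    proof (cases "k < j")
      case True
      then have "delf j k = k" by (simp add: delf_def)
      moreover have "k < t - 1" using True assms by auto
      ultimately show ?thesis by (metis image_eqI lessThan_iff)
    next
      case False
      then have "k > j" using k by auto
      then have "delf j (k-1) = k" by (auto simp: delf_def)
      moreover have "k - 1 < t - 1" using k \<open>k > j\<close> by auto
      ultimately show ?thesis by (metis image_eqI lessThan_iff)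
    qed
  qed
qed

lemma delf_lt: "j < t \<Longrightarrow> i < t - 1 \<Longrightarrow> delf j i < t"
  by (auto simp: delf_def)

lemma delf_ne: "delf j i \<noteq> j"
  by (auto simp: delf_def)

lemma del_nth: "i < t - 1 \<Longrightarrow> del_at t j es ! i = es ! delf j i"
  by (simp add: del_at_def)

lemma length_del[simp]: "length (del_at t j es) = t - 1"
  by (simp add: del_at_def)

lemma lc_split:
  assumes "length es = t" "j < t"
  shows "lin_comb a es = a ! j * es ! j + (\<Sum>i<t-1. a ! delf j i * es ! delf j i)"
proof -
  have "lin_comb a es = (\<Sum>k<t. a!k * es!k)" using assms by (simp add: lin_comb_def)
  also have "\<dots> = a ! j * es ! j + (\<Sum>k\<in>{..<t}-{j}. a!k * es!k)"
    using assms by (simp add: sum.remove)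
  also have "(\<Sum>k\<in>{..<t}-{j}. a!k * es!k) = (\<Sum>i<t-1. a ! delf j i * es ! delf j i)"
    using sum_skip[OF assms(2), of "\<lambda>k. a!k * es!k"] by simp
  finally show ?thesis .
qed

lemma indep_del:
  assumes K: "is_subfield K" and ind: "K_lin_indep K es" and len: "length es = t" and j: "j < t"
  shows "K_lin_indep K (del_at t j es)"
  unfolding K_lin_indep_def
proof (intro allI impI)
  fix cs assume h: "length cs = length (del_at t j es) \<and> set cs \<subseteq> K \<and> lin_comb cs (del_at t j es) = 0"
  define c' where "c' = map (\<lambda>k. if k = j then 0 else cs ! (if k < j then k else k - 1)) [0..<t]"
  have lc': "length c' = t" by (simp add: c'_def)
  have c'f: "c' ! delf j i = cs ! i" if "i < t - 1" for i
    using that j by (auto simp: c'_def delf_def nth_append)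
  have c'j: "c' ! j = 0" using j by (simp add: c'_def)
  have "lin_comb c' es = (\<Sum>i<t-1. c' ! delf j i * es ! delf j i)"
    using lc_split[OF len j, of c'] c'j by simp
  also have "\<dots> = (\<Sum>i<t-1. cs ! i * del_at t j es ! i)"
    by (rule sum.cong) (simp_all add: c'f del_nth)
  also have "\<dots> = lin_comb cs (del_at t j es)" by (simp add: lin_comb_def)
  finally have z: "lin_comb c' es = 0" using h by simp
  have "set c' \<subseteq> K"
  proof
    fix x assume "x \<in> set c'"
    then obtain k where k: "k < t" "x = c' ! k" using lc' by (auto simp: set_conv_nth)
    show "x \<in> K"
    proof (cases "k = j")
      case True then show ?thesis using k c'j K unfolding is_subfield_def by simp
    next
      case False
      then have "x = cs ! (if k < j then k else k - 1)" using k by (simp add: c'_def)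
      moreover have "(if k < j then k else k - 1) < length cs" using h k j False by auto
      ultimately have "x \<in> set cs" by simp
      then show ?thesis using h by blast
    qed
  qed
  then have c0: "set c' \<subseteq> {0}" using spec[OF ind[unfolded K_lin_indep_def], of c'] z lc' len by simp
  show "set cs \<subseteq> {0}"
  proof
    fix x assume "x \<in> set cs"
    then obtain i where i: "i < length cs" "x = cs ! i" by (auto simp: set_conv_nth)
    then have "i < t - 1" using h by simp
    then have "x = c' ! delf j i" using c'f i by simp
    moreover have "delf j i < length c'" using lc' delf_lt[OF j \<open>i < t - 1\<close>] by simp
    ultimately have "x \<in> set c'" by simp
    then show "x \<in> {0}" using c0 by blast
  qed
qed

lemma del_inj:
  assumes aj: "a ! j \<noteq> 0" and j: "j < t"
  shows "inj_on (del_at t j) {es. length es = t \<and> lin_comb a es = (0::'a::field)}"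
proof (rule inj_onI)
  fix es es' assume e1: "es \<in> {es. length es = t \<and> lin_comb a es = 0}"
    and e2: "es' \<in> {es. length es = t \<and> lin_comb a es = 0}" and eq: "del_at t j es = del_at t j es'"
  have d: "es ! delf j i = es' ! delf j i" if "i < t - 1" for i
    using eq del_nth[OF that, of j es] del_nth[OF that, of j es'] by simp
  have S: "(\<Sum>i<t-1. a ! delf j i * es ! delf j i) = (\<Sum>i<t-1. a ! delf j i * es' ! delf j i)"
    by (rule sum.cong) (simp_all add: d)
  have "a ! j * es ! j + (\<Sum>i<t-1. a ! delf j i * es ! delf j i) = a ! j * es' ! j + (\<Sum>i<t-1. a ! delf j i * es ! delf j i)"
    using lc_split[of es t j a] lc_split[of es' t j a] e1 e2 j S by simp
  then have "a ! j * es ! j = a ! j * es' ! j" by simp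
  then have ej: "es ! j = es' ! j" using aj by simp
  show "es = es'"
  proof (rule nth_equalityI)
    show "length es = length es'" using e1 e2 by simp
    fix k assume "k < length es"
    then have k: "k < t" using e1 by simp
    show "es ! k = es' ! k"
    proof (cases "k = j")
      case True then show ?thesis using ej by simp
    next
      case False
      then have "k \<in> delf j ` {..<t-1}" using delf_img[OF j] k by simp
      then obtain i where "i < t - 1" "k = delf j i" by auto
      then show ?thesis using d by simp
    qed
  qed
qed



lemma lc_zero: "length cs = length vs \<Longrightarrow> set cs \<subseteq> {0} \<Longrightarrow> lin_comb cs vs = 0"
proof -
  assume a: "length cs = length vs" "set cs \<subseteq> {0}"
  have "cs ! i = 0" if "i < length vs" for i
  proof -
    have "i < length cs" using that a by simp
    then have "cs ! i \<in> set cs" by (rule nth_mem)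
    then show ?thesis using a by auto
  qed
  then show ?thesis unfolding lin_comb_def by simp
qed

lemma zero_in_span: "is_subfield K \<Longrightarrow> 0 \<in> K_span K gs"
proof -
  assume "is_subfield K"
  have "lin_comb (replicate (length gs) 0) gs = 0" by (rule lc_zero) auto
  then show ?thesis using \<open>is_subfield K\<close> unfolding K_span_def
    by (intro CollectI exI[where x="replicate (length gs) 0"]) (auto simp: is_subfield_def)
qed
lemma dummy: "True"
  by simp

lemma exists_nonzero:
  assumes "length a = t" "a \<noteq> replicate t 0"
  shows "\<exists>j<t. a ! j \<noteq> 0"
proof (rule ccontr)
  assume "\<not> (\<exists>j<t. a ! j \<noteq> 0)"
  then have "a = replicate t 0" using assms(1) by (intro nth_equalityI) auto
  then show False using assms(2) by simp
qed

lemma card_S_a: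
  fixes K :: "'a::{field,finite} set"
  assumes K: "is_subfield K" and a: "length a = t" "a \<noteq> replicate t 0"
  shows "card {es\<in>Ei K t. lin_comb a es = 0} \<le> card (Ei K (t-1))"
proof -
  obtain j where j: "j < t" "a ! j \<noteq> 0" using exists_nonzero[OF a] by blast
  have inj: "inj_on (del_at t j) {es\<in>Ei K t. lin_comb a es = 0}"
    by (rule inj_on_subset[OF del_inj[OF j(2) j(1)]]) (auto simp: Ei_def)
  have "del_at t j ` {es\<in>Ei K t. lin_comb a es = 0} \<subseteq> Ei K (t-1)"
    using indep_del[OF K _ _ j(1)] by (auto simp: Ei_def)
  then show ?thesis using card_inj_on_le[OF inj _ finite_Ei] by blast
qed



theorem lemma1:
  fixes K :: "'a::{field,finite} set"
    and q m r d t :: nat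
    and gs :: "'a list"
    and A :: "'a set"
  assumes q_pp: "\<exists>p k. prime p \<and> k > 0 \<and> q = p ^ k"
    and K_sub: "is_subfield K"
    and K_card: "card K = q"
    and F_card: "card (UNIV :: 'a set) = q ^ m"
    and r_def: "length gs = r"
    and r_pos: "0 < r" and r_le: "r \<le> m"
    and A_sub: "A \<subseteq> K_span K gs"
    and A_lin: "\<exists>V. K_subspace K V \<and> V \<subseteq> A \<and> K_dim_ge K V d"
    and d_le: "d \<le> r"
    and t_ge: "1 \<le> t" and t_le: "t \<le> m"
  shows "real (card {es. length es = t \<and> K_lin_indep K es \<and>
                  (\<exists>as. length as = t \<and> set as \<subseteq> A \<and> as \<noteq> replicate t 0 \<and> lin_comb as es = 0)})
         / real (card {es :: 'a list. length es = t \<and> K_lin_indep K es})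
       \<le> (real q ^ (t * r + 1) - (real q ^ d - 1) * (real q ^ t - 1)) / (real q ^ (m + 1) - real q ^ t)"
proof -
  have finK: "finite K" by simp
  have q2: "2 \<le> q" using card_K_ge2[OF K_sub finK] K_card by simp
  obtain V vs where V: "K_subspace K V" "V \<subseteq> A" and vs: "length vs = d" "set vs \<subseteq> V" "K_lin_indep K vs"
    using A_lin unfolding K_dim_ge_def by blast
  define W where "W = K_span K vs"
  have WV: "W \<subseteq> V" unfolding W_def K_span_def using lc_in_subspace[OF V(1) vs(2)] by auto
  have cW: "card W = q ^ d" unfolding W_def using span_card_indep[OF finK K_sub vs(3)] vs(1) K_card by simp
  have W0: "0 \<in> W" unfolding W_def by (rule zero_in_span[OF K_sub])
  define S where "S = K_span K gs"
  have cS: "card S \<le> q ^ r" unfolding S_def using span_card_le[OF finK, of gs] K_card r_def by simp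
  have S0: "0 \<in> S" unfolding S_def by (rule zero_in_span[OF K_sub])
  define L where "L = {as. set as \<subseteq> S \<and> length as = t}"
  have finL: "finite L" unfolding L_def by (rule finite_lists_length_eq) simp
  have cL: "card L \<le> q ^ (r * t)"
  proof -
    have "card L = card S ^ t" unfolding L_def by (rule card_lists_length_eq) simp
    also have "\<dots> \<le> (q ^ r) ^ t" using cS by (rule power_mono) simp
    finally show ?thesis by (simp add: power_mult)
  qed
  define C where "C = {cs. set cs \<subseteq> K \<and> length cs = t - 1}"
  have cC: "card C = q ^ (t - 1)" unfolding C_def using card_lists_length_eq[OF finK] K_card by simp
  define zf where "zf = (\<lambda>(w::'a, cs::'a list). map (\<lambda>c. w * c) (1 # cs))"
  define Z where "Z = zf ` ((W - {0}) \<times> C)"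
  have injz: "inj_on zf ((W - {0}) \<times> C)"
  proof (rule inj_onI)
    fix x y assume x: "x \<in> (W - {0}) \<times> C" and y: "y \<in> (W - {0}) \<times> C" and e: "zf x = zf y"
    obtain w cs where xw: "x = (w, cs)" by (cases x)
    obtain w' cs' where yw: "y = (w', cs')" by (cases y)
    have ww: "w = w'" using e unfolding xw yw zf_def by simp
    have "w \<noteq> 0" using x xw by simp
    then have "cs = cs'" using e unfolding xw yw zf_def ww
      by (simp add: inj_on_def list.inj_map_strong)
    then show "x = y" using xw yw ww by simp
  qed
  have cZ: "card Z = (q ^ d - 1) * q ^ (t - 1)"
  proof -
    have "card Z = card ((W - {0}) \<times> C)" unfolding Z_def by (rule card_image[OF injz])
    also have "\<dots> = card (W - {0}) * card C" by (rule card_cartesian_product)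
    also have "card (W - {0}) = q ^ d - 1" using W0 cW by simp
    finally show ?thesis using cC by simp
  qed
  have ZL: "Z \<subseteq> L - {replicate t 0}"
  proof
    fix z assume "z \<in> Z"
    then obtain w cs where z: "z = map (\<lambda>c. w * c) (1 # cs)" "w \<in> W" "w \<noteq> 0" "cs \<in> C"
      unfolding Z_def zf_def by auto
    have "set z \<subseteq> V"
    proof
      fix x assume "x \<in> set z"
      then have "x = w \<or> (\<exists>c\<in>set cs. x = w * c)" using z(1) by auto
      moreover have "w \<in> V" using z(2) WV by auto
      moreover have "set cs \<subseteq> K" using z(4) C_def by simp
      ultimately show "x \<in> V" using V(1) unfolding K_subspace_def by (auto simp: mult.commute)
    qed
    then have "set z \<subseteq> S" using V(2) A_sub S_def by blast
    moreover have "length z = t" using z(1,4) t_ge C_def by simp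
    moreover have "z \<noteq> replicate t 0" using z(1,3) t_ge by (cases t) auto
    ultimately show "z \<in> L - {replicate t 0}" unfolding L_def by simp
  qed
  have Zne: "lin_comb z es \<noteq> 0" if "z \<in> Z" "es \<in> Ei K t" for z es
  proof -
    from that(1) obtain w cs where z: "z = map (\<lambda>c. w * c) (1 # cs)" "w \<noteq> 0" "cs \<in> C" "w \<in> W"
      unfolding Z_def zf_def by auto
    have len: "length (1 # cs) = length es" using z(3) that(2) t_ge unfolding C_def Ei_def by simp
    have "lin_comb (1 # cs) es \<noteq> 0"
    proof
      assume h: "lin_comb (1 # cs) es = 0"
      have "set (1 # cs) \<subseteq> K" using z(3) K_sub unfolding C_def is_subfield_def by simp
      then have "set (1 # cs) \<subseteq> {0}" using h len that(2) unfolding Ei_def K_lin_indep_def by blast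
      then show False by simp
    qed
    then show ?thesis using z(1,2) lc_scale[OF len, of w] by simp
  qed
  define G where "G = L - {replicate t 0} - Z"
  have R0: "replicate t 0 \<in> L" unfolding L_def using S0 by auto
  have cG: "real (card G) = real (card L) - 1 - real (card Z)"
  proof -
    have "card G = card (L - {replicate t 0}) - card Z"
      unfolding G_def using ZL finL by (simp add: card_Diff_subset finite_subset)
    moreover have "card (L - {replicate t 0}) = card L - 1" using R0 finL by simp
    moreover have "card Z \<le> card L - 1"
      using ZL finL R0 by (metis card_Diff_singleton card_mono finite_Diff)
    moreover have "1 \<le> card L" using R0 finL by (metis One_nat_def Suc_leI card_gt_0_iff empty_iff)
    ultimately show ?thesis by simp
  qed
  define P where "P = {es. length es = t \<and> K_lin_indep K es \<and>
                  (\<exists>as. length as = t \<and> set as \<subseteq> A \<and> as \<noteq> replicate t 0 \<and> lin_comb as es = 0)}"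
  define N where "N = card (Ei K (t - 1))"
  have tt: "Suc (t - 1) = t" using t_ge by simp
  have cE: "card (Ei K t) = N * (q ^ m - q ^ (t - 1))"
    using card_Ei_Suc[OF K_sub, of m "t - 1"] F_card K_card tt N_def by simp
  have Npos: "0 < N" unfolding N_def using card_Ei_pos[OF K_sub, of m "t-1"] F_card K_card t_le by simp
  have PU: "P \<subseteq> (\<Union>a\<in>G. {es\<in>Ei K t. lin_comb a es = 0})"
  proof
    fix es assume "es \<in> P"
    then obtain as where es: "length es = t" "K_lin_indep K es" "length as = t" "set as \<subseteq> A"
      "as \<noteq> replicate t 0" "lin_comb as es = 0" unfolding P_def by blast
    have esE: "es \<in> Ei K t" using es unfolding Ei_def by simp
    have "as \<notin> Z" using Zne[OF _ esE] es(6) by blast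
    moreover have "as \<in> L" using es(3,4) A_sub unfolding L_def S_def by blast
    ultimately have "as \<in> G" unfolding G_def using es(5) by simp
    then show "es \<in> (\<Union>a\<in>G. {es\<in>Ei K t. lin_comb a es = 0})" using esE es(6) by blast
  qed
  have finG: "finite G" unfolding G_def using finL by simp
  have cP: "card P \<le> card G * N"
  proof -
    have "card P \<le> card (\<Union>a\<in>G. {es\<in>Ei K t. lin_comb a es = 0})"
      by (rule card_mono[OF _ PU], rule finite_UN_I[OF finG]) (simp add: finite_Ei)
    also have "\<dots> \<le> (\<Sum>a\<in>G. card {es\<in>Ei K t. lin_comb a es = 0})" by (rule card_UN_le[OF finG])
    also have "\<dots> \<le> (\<Sum>a\<in>G. N)"
    proof (rule sum_mono)
      fix a assume "a \<in> G"
      then have "length a = t" "a \<noteq> replicate t 0" unfolding G_def L_def by auto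
      then show "card {es\<in>Ei K t. lin_comb a es = 0} \<le> N" unfolding N_def by (rule card_S_a[OF K_sub])
    qed
    finally show ?thesis by simp
  qed
  define x where "x = real q"
  have x2: "2 \<le> x" unfolding x_def using q2 by simp
  have qlt: "q ^ (t - 1) < q ^ m" using q2 t_le t_ge by (intro power_strict_increasing) auto
  define Dr where "Dr = x ^ m - x ^ (t - 1)"
  have DrE: "real (q ^ m - q ^ (t - 1)) = Dr" unfolding Dr_def x_def using qlt by (simp add: of_nat_diff)
  have Drpos: "0 < Dr" using DrE qlt by (metis of_nat_0_less_iff zero_less_diff)
  have Npos': "0 < real N" using Npos by simp
  have den: "real (card (Ei K t)) = real N * Dr" using cE DrE by simp
  have step1: "real (card P) / real (card (Ei K t)) \<le> real (card G) / Dr"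
  proof -
    have "real (card P) \<le> real (card G) * real N" using cP by (metis of_nat_le_iff of_nat_mult)
    then have "real (card P) / (real N * Dr) \<le> real (card G) * real N / (real N * Dr)"
      using Npos' Drpos by (intro divide_right_mono) auto
    also have "\<dots> = real (card G) / Dr" using Npos' by simp
    finally show ?thesis using den by simp
  qed
  have cLr: "real (card L) \<le> x ^ (t * r)" unfolding x_def using cL
    by (metis mult.commute of_nat_le_iff of_nat_power)
  have qd1: "1 \<le> q ^ d" using q2 by simp
  have cZr: "real (card Z) = (x ^ d - 1) * x ^ (t - 1)" unfolding x_def using cZ qd1 by (simp add: of_nat_diff)
  have xt: "x ^ t = x * x ^ (t - 1)" using t_ge by (metis Suc_diff_le diff_Suc_1 power_Suc)
  have xd: "1 \<le> x ^ d" using x2 by simp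
  have num: "x * real (card G) \<le> x ^ (t * r + 1) - (x ^ d - 1) * (x ^ t - 1)"
  proof -
    have "x * real (card G) = x * (real (card L) - 1 - (x ^ d - 1) * x ^ (t - 1))"
      using cG cZr by simp
    also have "\<dots> = x * real (card L) - x - (x ^ d - 1) * x ^ t"
      unfolding xt by (simp add: algebra_simps)
    finally have "x * real (card G) = x * real (card L) - x - (x ^ d - 1) * x ^ t" .
    also have "\<dots> \<le> x * x ^ (t * r) - x - (x ^ d - 1) * x ^ t"
      using cLr x2 by simp
    also have "\<dots> \<le> x ^ (t * r + 1) - (x ^ d - 1) * (x ^ t - 1)"
    proof -
      have "1 \<le> x + x ^ d" using xd x2 by linarith
      then show ?thesis by (simp add: algebra_simps)
    qed
    finally show ?thesis .
  qed
  have dd: "x ^ (m + 1) - x ^ t = x * Dr" unfolding Dr_def using xt by (simp add: algebra_simps)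
  have step2: "real (card G) / Dr \<le> (x ^ (t * r + 1) - (x ^ d - 1) * (x ^ t - 1)) / (x ^ (m + 1) - x ^ t)"
  proof -
    have "real (card G) / Dr = (x * real (card G)) / (x * Dr)" using x2 by simp
    also have "\<dots> \<le> (x ^ (t * r + 1) - (x ^ d - 1) * (x ^ t - 1)) / (x * Dr)"
      using num x2 Drpos by (intro divide_right_mono) auto
    finally show ?thesis using dd by simp
  qed
  have "real (card P) / real (card (Ei K t)) \<le> (x ^ (t * r + 1) - (x ^ d - 1) * (x ^ t - 1)) / (x ^ (m + 1) - x ^ t)"
    using step1 step2 by linarith
  moreover have "Ei K t = {es :: 'a list. length es = t \<and> K_lin_indep K es}" by (simp add: Ei_def)
  ultimately show ?thesis unfolding P_def x_def by simp
qed


end
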